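(* (i) For all integers $m\ge1$, $n\ge 2$ and all real $\alpha\notin\pi\mathbb{Z}$, $$S(m,n,\alpha)=\operatorname{Tr}\big((\cot\alpha\, J_n+B_n)^m\big).$$ (ii) For each $m\ge 1$ there are polynomials $p_{m,m-2k}(x)$, $0\le k\le\lfloor m/2\rfloor$, with rational coefficients, integer-valued and independent of $n$ and $\alpha$, such that for all $n\ge2$ and all real $\alpha\notin\pi\mathbb{Z}$ $$S(m,n,\alpha)=\sum_{0\le k\le\lfloor m/2\rfloor}p_{m,m-2k}(n)\cot^{m-2k}\alpha .$$ Moreover, for every integer $n\ge 2$ the coefficients $p_{m,m-2k}(n)$ are positive integers.
   Context: For integers $m\ge1$, $n\ge2$ and real $\alpha\notin\pi\mathbb{Z}$, $S(m,n,\alpha)=\sum_{k=0}^{n-1}\cot^m\frac{\alpha+k\pi}{n}$. $J_n$ is the $n\times n$ all-ones matrix, and $B_n=i\,M$ where $M$ is the $n\times n$ matrix with zero diagonal, entries $1$ above the diagonal and $-1$ below the diagonal. *)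

theory Defs
  imports Complex_Main "HOL-Computational_Algebra.Polynomial" "Jordan_Normal_Form.Matrix"
begin

definition S :: "nat \<Rightarrow> nat \<Rightarrow> real \<Rightarrow> real" where
  "S m n \<alpha> = (\<Sum>k<n. cot ((\<alpha> + real k * pi) / real n) ^ m)"

definition J_mat :: "nat \<Rightarrow> complex mat" where
  "J_mat n = mat n n (\<lambda>(i,j). 1)"

definition B_mat :: "nat \<Rightarrow> complex mat" where
  "B_mat n = mat n n (\<lambda>(i,j). if i < j then \<i> else if j < i then - \<i> else 0)"

definition mat_trace :: "'a::comm_ring_1 mat \<Rightarrow> 'a" where
  "mat_trace A = (\<Sum>i<dim_row A. A $$ (i,i))"

end

theory Submission
  imports Defs
begin


definition Bf :: "nat \<Rightarrow> nat \<Rightarrow> complex" where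
  "Bf i j = (if i < j then \<i> else if j < i then - \<i> else 0)"

definition Af :: "complex \<Rightarrow> nat \<Rightarrow> nat \<Rightarrow> complex" where
  "Af c i j = c + Bf i j"

fun fpow :: "nat \<Rightarrow> (nat \<Rightarrow> nat \<Rightarrow> complex) \<Rightarrow> nat \<Rightarrow> nat \<Rightarrow> nat \<Rightarrow> complex" where
  "fpow n M 0 i j = (if i = j then 1 else 0)"
| "fpow n M (Suc m) i j = (\<Sum>l<n. fpow n M m i l * M l j)"

definition th :: "nat \<Rightarrow> real \<Rightarrow> nat \<Rightarrow> real" where
  "th n a k = (a + real k * pi) / real n"

definition Vm :: "nat \<Rightarrow> real \<Rightarrow> nat \<Rightarrow> nat \<Rightarrow> complex" where
  "Vm n a i k = cis (-2 * th n a k) ^ i"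

definition Wm :: "nat \<Rightarrow> real \<Rightarrow> nat \<Rightarrow> nat \<Rightarrow> complex" where
  "Wm n a k j = cis (2 * th n a k * real j) / of_nat n"

lemma sin_th_nz:
  assumes "n > 0" "\<forall>j::int. a \<noteq> of_int j * pi"
  shows "sin (th n a k) \<noteq> 0"
proof
  assume "sin (th n a k) = 0"
  then obtain i :: int where "th n a k = of_int i * pi" by (auto simp: sin_zero_iff_int2)
  then have "a + real k * pi = of_int i * pi * real n" using assms(1) by (simp add: th_def field_simps)
  then have "a = of_int (i * int n - int k) * pi" by (simp add: algebra_simps)
  with assms(2) show False by blast
qed

lemma key_cis:
  assumes "sin t \<noteq> 0"
  shows "\<i> * (1 + cis (-2 * t)) = complex_of_real (cot t) * (1 - cis (-2 * t))"
proof -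
  have c2: "cos (t*2) = 1 - 2 * sin t ^ 2"
    using cos_double_sin[of t] by (simp add: mult.commute)
  have s2: "sin (t*2) = 2 * sin t * cos t"
    using sin_double[of t] by (simp add: mult.commute)
  have sc: "cos t ^ 2 = 1 - sin t ^ 2" using sin_cos_squared_add[of t] by linarith
  have e1: "cos t * cos (t * 2) + sin t * sin (t * 2) = cos t"
    unfolding c2 s2 by (simp add: algebra_simps power2_eq_square)
  have e2: "sin t + sin t * cos (t * 2) = cos t * sin (t * 2)"
  proof -
    have "sin t + sin t * cos (t * 2) = 2*sin t*(1 - sin t^2)" unfolding c2 by (simp add: algebra_simps power2_eq_square)
    also have "\<dots> = 2*sin t*cos t^2" by (simp add: sc)
    also have "\<dots> = cos t * sin (t * 2)" unfolding s2 by (simp add: power2_eq_square)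
    finally show ?thesis .
  qed
  show ?thesis
    using assms e1 e2
    by (simp add: complex_eq_iff cot_def field_simps)
qed

lemma roots_sum:
  fixes d :: int
  assumes "n > 0" "- int n < d" "d < int n"
  shows "(\<Sum>k<n. cis (2 * pi * real k * of_int d / real n)) = (if d = 0 then of_nat n else 0)"
proof -
  define z where "z = cis (2 * pi * of_int d / real n)"
  have zk: "cis (2 * pi * real k * of_int d / real n) = z ^ k" for k
    by (simp add: z_def DeMoivre mult_ac)
  have zn: "z ^ n = 1"
  proof -
    have "z ^ n = cis (2 * pi * of_int d)" using assms(1) by (simp add: z_def DeMoivre)
    also have "\<dots> = 1" by (simp add: cis_multiple_2pi)
    finally show ?thesis .
  qed
  show ?thesis
  proof (cases "d = 0")
    case True then show ?thesis by simp
  next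
    case False
    have "z \<noteq> 1"
    proof
      assume "z = 1"
      then have "cos (2 * pi * of_int d / real n) = 1" by (simp add: z_def complex_eq_iff)
      then obtain q :: int where q: "2 * pi * of_int d / real n = of_int q * 2 * pi"
        by (auto simp: cos_one_2pi_int)
      then have "of_int d = of_int q * real n" using assms(1) by (simp add: field_simps)
      then have dq: "d = q * int n" by (metis of_int_eq_iff of_int_mult of_int_of_nat_eq)
      show False
      proof (cases "q = 0")
        case True with dq False show ?thesis by simp
      next
        case False
        then have "1 \<le> \<bar>q\<bar>" by linarith
        then have "int n \<le> \<bar>q\<bar> * int n" using mult_right_mono[of 1 "\<bar>q\<bar>" "int n"] by simp
        then have "\<bar>q * int n\<bar> \<ge> int n" by (simp add: abs_mult)
        with dq assms show ?thesis by linarith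
      qed
    qed
    then show ?thesis using False zn by (simp add: zk sum_gp_strict)
  qed
qed

lemma VW:
  assumes n: "n > 0" and ij: "i < n" "j < n"
  shows "(\<Sum>k<n. Vm n a i k * Wm n a k j) = (if i = j then 1 else 0)"
proof -
  have eq: "Vm n a i k * Wm n a k j =
     cis (2 * a * (real j - real i) / real n) / of_nat n *
     cis (2 * pi * real k * of_int (int j - int i) / real n)" for k
  proof -
    have "Vm n a i k * Wm n a k j = cis (real i * (-2 * th n a k)) * cis (2 * th n a k * real j) / of_nat n"
      unfolding Vm_def Wm_def DeMoivre by simp
    also have "\<dots> = cis (real i * (-2 * th n a k) + 2 * th n a k * real j) / of_nat n"
      by (simp only: cis_mult)
    also have "real i * (-2 * th n a k) + 2 * th n a k * real j =
       2 * a * (real j - real i) / real n + 2 * pi * real k * of_int (int j - int i) / real n"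
      using n by (simp add: th_def field_simps)
    finally show ?thesis by (simp add: cis_mult[symmetric])
  qed
  have "(\<Sum>k<n. Vm n a i k * Wm n a k j) = cis (2 * a * (real j - real i) / real n) / of_nat n *
     (\<Sum>k<n. cis (2 * pi * real k * of_int (int j - int i) / real n))"
    by (simp add: eq sum_distrib_left)
  also have "\<dots> = (if i = j then 1 else 0)"
    using ij n by (subst roots_sum) auto
  finally show ?thesis .
qed

lemma WV:
  assumes n: "n > 0" and kl: "k < n" "l < n"
  shows "(\<Sum>i<n. Wm n a k i * Vm n a i l) = (if k = l then 1 else 0)"
proof -
  have eq: "Wm n a k i * Vm n a i l =
     cis (2 * pi * real i * of_int (int k - int l) / real n) / of_nat n" for i
  proof -
    have "Wm n a k i * Vm n a i l = cis (2 * th n a k * real i) * cis (real i * (-2 * th n a l)) / of_nat n"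
      unfolding Vm_def Wm_def DeMoivre by simp
    also have "\<dots> = cis (2 * th n a k * real i + real i * (-2 * th n a l)) / of_nat n"
      by (simp only: cis_mult)
    also have "2 * th n a k * real i + real i * (-2 * th n a l) =
        2 * pi * real i * of_int (int k - int l) / real n"
      using n by (simp add: th_def field_simps)
    finally show ?thesis .
  qed
  have "(\<Sum>i<n. Wm n a k i * Vm n a i l) =
     (\<Sum>i<n. cis (2 * pi * real i * of_int (int k - int l) / real n)) / of_nat n"
    by (simp add: eq sum_divide_distrib)
  also have "\<dots> = (if k = l then 1 else 0)"
    using kl n by (subst roots_sum) auto
  finally show ?thesis .
qed

lemma Bf_sum:
  fixes w :: complex
  assumes "i < n"
  shows "(\<Sum>l<n. Bf i l * w ^ l) = \<i> * ((\<Sum>l<n. w ^ l) - (\<Sum>l<Suc i. w ^ l)) - \<i> * (\<Sum>l<i. w ^ l)"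
proof -
  have "(\<Sum>l<n. Bf i l * w ^ l) = (\<Sum>l<n. \<i> * (if i < l then w ^ l else 0) - \<i> * (if l < i then w ^ l else 0))"
    by (rule sum.cong) (auto simp: Bf_def)
  also have "\<dots> = \<i> * (\<Sum>l<n. (if i < l then w ^ l else 0)) - \<i> * (\<Sum>l<n. (if l < i then w ^ l else 0))"
    by (simp add: sum_subtractf sum_distrib_left)
  also have "(\<Sum>l<n. (if l < i then w ^ l else 0)) = (\<Sum>l<i. w ^ l)"
    by (rule sum.mono_neutral_cong_right) (use assms in auto)
  also have "(\<Sum>l<n. (if i < l then w ^ l else 0)) = (\<Sum>l<n. w ^ l) - (\<Sum>l<Suc i. w ^ l)"
  proof -
    have "(\<Sum>l<n. w ^ l) = (\<Sum>l<n. (if i < l then w ^ l else 0)) + (\<Sum>l<n. (if l < Suc i then w ^ l else 0))"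
      by (subst sum.distrib[symmetric]) (rule sum.cong, auto)
    also have "(\<Sum>l<n. (if l < Suc i then w ^ l else 0)) = (\<Sum>l<Suc i. w ^ l)"
      by (rule sum.mono_neutral_cong_right) (use assms in auto)
    finally show ?thesis by simp
  qed
  finally show ?thesis .
qed

lemma eig_alg:
  fixes w c x :: complex
  assumes h1: "c * (1 - w ^ n) = \<i> * (1 + w ^ n)" and h2: "x * (1 - w) = \<i> * (1 + w)" and i: "i < n"
  shows "(\<Sum>l<n. (c + Bf i l) * w ^ l) = x * w ^ i"
proof -
  have w1: "1 - w \<noteq> 0"
  proof
    assume "1 - w = 0"
    then have "w = 1" by simp
    with h2 show False by simp
  qed
  have gs: "(1 - w) * (\<Sum>l<N. w ^ l) = 1 - w ^ N" for N
    by (simp add: one_diff_power_eq)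
  have "(1 - w) * (\<Sum>l<n. (c + Bf i l) * w ^ l) =
      c * ((1 - w) * (\<Sum>l<n. w ^ l)) + (1 - w) * (\<Sum>l<n. Bf i l * w ^ l)"
    by (simp add: distrib_right sum.distrib sum_distrib_left algebra_simps)
  also have "\<dots> = c * (1 - w ^ n) + \<i> * ((1 - w ^ n) - (1 - w ^ Suc i)) - \<i> * (1 - w ^ i)"
    unfolding Bf_sum[OF i] gs[symmetric] by (simp add: algebra_simps)
  also have "\<dots> = (c * (1 - w ^ n) - \<i> * (1 + w ^ n)) + \<i> * (1 + w) * w ^ i"
    by (simp add: algebra_simps)
  also have "\<dots> = (1 - w) * (x * w ^ i)"
  proof -
    have e: "\<i> * (1 + w) * w ^ i = (1 - w) * (x * w ^ i)" by (simp add: h2[symmetric] mult_ac)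
    show ?thesis by (simp add: h1 e)
  qed
  finally show ?thesis using w1 by simp
qed

lemma A_eigvec:
  assumes n: "n > 0" and a: "\<forall>j::int. a \<noteq> of_int j * pi" and ik: "i < n" "k < n"
  shows "(\<Sum>l<n. Af (of_real (cot a)) i l * Vm n a l k) = of_real (cot (th n a k)) * Vm n a i k"
proof -
  define w where "w = cis (-2 * th n a k)"
  have sa: "sin a \<noteq> 0"
  proof
    assume "sin a = 0"
    then obtain j :: int where "a = of_int j * pi" by (auto simp: sin_zero_iff_int2)
    with a show False by blast
  qed
  have wn: "w ^ n = cis (-2 * a)"
  proof -
    have "w ^ n = cis (real n * (-2 * th n a k))" by (simp add: w_def DeMoivre)
    also have "real n * (-2 * th n a k) = -2 * a + 2 * pi * (- real k)"
      using n by (simp add: th_def field_simps)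
    also have "cis (-2 * a + 2 * pi * (- real k)) = cis (-2 * a) * cis (2 * pi * (- real k))"
      by (simp only: cis_mult)
    also have "cis (2 * pi * (- real k)) = 1"
      by (rule cis_multiple_2pi) (simp add: Ints_minus)
    finally show ?thesis by simp
  qed
  have h1: "of_real (cot a) * (1 - w ^ n) = \<i> * (1 + w ^ n)"
    using key_cis[OF sa] unfolding wn by simp
  have h2: "of_real (cot (th n a k)) * (1 - w) = \<i> * (1 + w)"
    using key_cis[OF sin_th_nz[OF n a]] unfolding w_def by simp
  show ?thesis
    using eig_alg[OF h1 h2 ik(1)] by (simp add: Af_def Vm_def w_def)
qed

lemma A_decomp:
  assumes n: "n > 0" and a: "\<forall>j::int. a \<noteq> of_int j * pi" and lj: "l < n" "j < n"
  shows "Af (of_real (cot a)) l j = (\<Sum>p<n. Vm n a l p * of_real (cot (th n a p)) * Wm n a p j)"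
proof -
  let ?A = "Af (of_real (cot a))"
  have "(\<Sum>p<n. Vm n a l p * of_real (cot (th n a p)) * Wm n a p j) =
        (\<Sum>p<n. (\<Sum>q<n. ?A l q * Vm n a q p) * Wm n a p j)"
    by (rule sum.cong) (use A_eigvec[OF n a lj(1)] in \<open>auto simp: mult_ac\<close>)
  also have "\<dots> = (\<Sum>p<n. \<Sum>q<n. ?A l q * (Vm n a q p * Wm n a p j))"
    by (simp add: sum_distrib_right mult.assoc)
  also have "\<dots> = (\<Sum>q<n. \<Sum>p<n. ?A l q * (Vm n a q p * Wm n a p j))"
    by (rule sum.swap)
  also have "\<dots> = (\<Sum>q<n. ?A l q * (\<Sum>p<n. Vm n a q p * Wm n a p j))"
    by (simp add: sum_distrib_left)
  also have "\<dots> = (\<Sum>q<n. ?A l q * (if q = j then 1 else 0))"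
    by (rule sum.cong) (use VW[OF n _ lj(2)] in auto)
  also have "\<dots> = ?A l j" using lj by (simp add: if_distrib cong: if_cong)
  finally show ?thesis by simp
qed

lemma fpow_eig:
  assumes n: "n > 0" and a: "\<forall>j::int. a \<noteq> of_int j * pi" and ij: "i < n" "j < n"
  shows "fpow n (Af (of_real (cot a))) m i j =
     (\<Sum>k<n. Vm n a i k * of_real (cot (th n a k)) ^ m * Wm n a k j)"
  using ij(2)
proof (induction m arbitrary: j)
  case 0
  then show ?case using VW[OF n ij(1) 0] by simp
next
  case (Suc m)
  let ?A = "Af (of_real (cot a))"
  let ?X = "\<lambda>k. complex_of_real (cot (th n a k))"
  have "fpow n ?A (Suc m) i j = (\<Sum>l<n. fpow n ?A m i l * ?A l j)" by simp
  also have "\<dots> = (\<Sum>l<n. (\<Sum>k<n. Vm n a i k * ?X k ^ m * Wm n a k l) *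
                          (\<Sum>p<n. Vm n a l p * ?X p * Wm n a p j))"
    by (rule sum.cong) (use Suc.IH A_decomp[OF n a _ Suc.prems] in auto)
  also have "\<dots> = (\<Sum>l<n. \<Sum>k<n. \<Sum>p<n. (Vm n a i k * ?X k ^ m * ?X p * Wm n a p j) * (Wm n a k l * Vm n a l p))"
    unfolding sum_product by (simp add: mult_ac)
  also have "\<dots> = (\<Sum>k<n. \<Sum>p<n. \<Sum>l<n. (Vm n a i k * ?X k ^ m * ?X p * Wm n a p j) * (Wm n a k l * Vm n a l p))"
    by (subst sum.swap) (rule sum.cong[OF refl], rule sum.swap)
  also have "\<dots> = (\<Sum>k<n. \<Sum>p<n. (Vm n a i k * ?X k ^ m * ?X p * Wm n a p j) * (if k = p then 1 else 0))"
    by (intro sum.cong refl) (simp add: sum_distrib_left[symmetric] WV[OF n])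
  also have "\<dots> = (\<Sum>k<n. Vm n a i k * ?X k ^ Suc m * Wm n a k j)"
    by (intro sum.cong refl) (simp add: if_distrib mult_ac cong: if_cong)
  finally show ?case .
qed

lemma mat_fpow:
  assumes A: "A \<in> carrier_mat n n" and ij: "i < n" "j < n"
  shows "(A ^\<^sub>m m) $$ (i,j) = fpow n (\<lambda>i j. A $$ (i,j)) m i j"
  using ij(2)
proof (induction m arbitrary: j)
  case 0
  then show ?case using A ij by auto
next
  case (Suc m)
  have "(A ^\<^sub>m Suc m) $$ (i,j) = row (A ^\<^sub>m m) i \<bullet> col A j"
    using A ij Suc.prems by simp
  also have "\<dots> = (\<Sum>l<n. (A ^\<^sub>m m) $$ (i,l) * A $$ (l,j))"
    using A ij Suc.prems unfolding scalar_prod_def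
    by (auto simp: atLeast0LessThan intro!: sum.cong)
  also have "\<dots> = fpow n (\<lambda>i j. A $$ (i,j)) (Suc m) i j"
    by (simp add: Suc.IH)
  finally show ?case .
qed

definition AM :: "nat \<Rightarrow> real \<Rightarrow> complex mat" where
  "AM n c = complex_of_real c \<cdot>\<^sub>m J_mat n + B_mat n"

lemma AM_carrier: "AM n c \<in> carrier_mat n n"
  by (simp add: AM_def J_mat_def B_mat_def)

lemma AM_index: "i < n \<Longrightarrow> j < n \<Longrightarrow> AM n c $$ (i,j) = Af (of_real c) i j"
  by (simp add: AM_def J_mat_def B_mat_def Af_def Bf_def)

lemma AM_fpow: "i < n \<Longrightarrow> j < n \<Longrightarrow> (AM n c ^\<^sub>m m) $$ (i,j) = fpow n (Af (of_real c)) m i j"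
proof -
  assume ij: "i < n" "j < n"
  have "(AM n c ^\<^sub>m m) $$ (i,j) = fpow n (\<lambda>i j. AM n c $$ (i,j)) m i j"
    by (rule mat_fpow[OF AM_carrier ij])
  also have "fpow n (\<lambda>i j. AM n c $$ (i,j)) m i j = fpow n (Af (of_real c)) m i j"
    using ij
  proof (induction m arbitrary: j)
    case (Suc m)
    then show ?case by (auto simp: AM_index intro!: sum.cong)
  qed simp
  finally show ?thesis .
qed

lemma trace_AM: "mat_trace (AM n c ^\<^sub>m m) = (\<Sum>i<n. fpow n (Af (of_real c)) m i i)"
  using AM_carrier[of n c] by (simp add: mat_trace_def AM_fpow)

lemma part1:
  assumes n: "n > 0" and a: "\<forall>j::int. a \<noteq> of_int j * pi"
  shows "complex_of_real (S m n a) = mat_trace (AM n (cot a) ^\<^sub>m m)"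
proof -
  let ?X = "\<lambda>k. complex_of_real (cot (th n a k))"
  have "mat_trace (AM n (cot a) ^\<^sub>m m) = (\<Sum>i<n. \<Sum>k<n. Vm n a i k * ?X k ^ m * Wm n a k i)"
    unfolding trace_AM by (rule sum.cong) (use fpow_eig[OF n a] in auto)
  also have "\<dots> = (\<Sum>k<n. \<Sum>i<n. ?X k ^ m * (Wm n a k i * Vm n a i k))"
    by (subst sum.swap) (simp add: mult_ac)
  also have "\<dots> = (\<Sum>k<n. ?X k ^ m)"
    by (rule sum.cong) (simp_all add: sum_distrib_left[symmetric] WV[OF n])
  also have "\<dots> = complex_of_real (S m n a)"
    by (simp add: S_def th_def)
  finally show ?thesis by simp
qed



definition rs :: "nat \<Rightarrow> (nat \<Rightarrow> nat \<Rightarrow> complex) \<Rightarrow> nat \<Rightarrow> nat \<Rightarrow> complex" where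
  "rs n M r i = (\<Sum>l<n. fpow n M r i l)"
definition cs :: "nat \<Rightarrow> (nat \<Rightarrow> nat \<Rightarrow> complex) \<Rightarrow> nat \<Rightarrow> nat \<Rightarrow> complex" where
  "cs n M h j = (\<Sum>p<n. fpow n M h p j)"
definition tot :: "nat \<Rightarrow> (nat \<Rightarrow> nat \<Rightarrow> complex) \<Rightarrow> nat \<Rightarrow> complex" where
  "tot n M g = (\<Sum>p<n. \<Sum>j<n. fpow n M g p j)"
definition gam :: "nat \<Rightarrow> complex \<Rightarrow> nat \<Rightarrow> nat \<Rightarrow> complex" where
  "gam n c h r = (\<Sum>i<n. cs n Bf h i * rs n (Af c) r i)"

lemma fpow_add:
  assumes "j < n"
  shows "fpow n M (h + r) i j = (\<Sum>l<n. fpow n M h i l * fpow n M r l j)"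
  using assms
proof (induction r arbitrary: j)
  case 0
  then show ?case by (simp add: if_distrib cong: if_cong)
next
  case (Suc r)
  have "fpow n M (h + Suc r) i j = (\<Sum>q<n. fpow n M (h + r) i q * M q j)" by simp
  also have "\<dots> = (\<Sum>q<n. \<Sum>l<n. fpow n M h i l * fpow n M r l q * M q j)"
    by (rule sum.cong) (simp_all add: Suc.IH sum_distrib_right)
  also have "\<dots> = (\<Sum>l<n. \<Sum>q<n. fpow n M h i l * (fpow n M r l q * M q j))"
    by (subst sum.swap) (simp add: mult_ac)
  also have "\<dots> = (\<Sum>l<n. fpow n M h i l * fpow n M (Suc r) l j)"
    by (simp add: sum_distrib_left)
  finally show ?case .
qed

lemma LEM:
  assumes "j < n"
  shows "fpow n (Af c) m i j = fpow n Bf m i j +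
           c * (\<Sum>h<m. rs n (Af c) (m - Suc h) i * cs n Bf h j)"
  using assms
proof (induction m arbitrary: j)
  case 0
  then show ?case by simp
next
  case (Suc m)
  let ?A = "Af c"
  have csS: "(\<Sum>q<n. cs n Bf h q * Bf q j) = cs n Bf (Suc h) j" for h
    unfolding cs_def by (simp add: sum_distrib_right sum_distrib_left) (subst sum.swap, simp)
  have "fpow n ?A (Suc m) i j = (\<Sum>q<n. fpow n ?A m i q * (c + Bf q j))"
    by (simp add: Af_def)
  also have "\<dots> = c * rs n ?A m i + (\<Sum>q<n. fpow n ?A m i q * Bf q j)"
    by (simp add: rs_def algebra_simps sum.distrib sum_distrib_left)
  also have "(\<Sum>q<n. fpow n ?A m i q * Bf q j) =
     (\<Sum>q<n. (fpow n Bf m i q + c * (\<Sum>h<m. rs n ?A (m - Suc h) i * cs n Bf h q)) * Bf q j)"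
    by (rule sum.cong) (simp_all add: Suc.IH)
  also have "\<dots> = fpow n Bf (Suc m) i j +
      c * (\<Sum>h<m. rs n ?A (m - Suc h) i * (\<Sum>q<n. cs n Bf h q * Bf q j))"
    by (simp add: algebra_simps sum.distrib sum_distrib_left sum_distrib_right)
       (subst sum.swap, simp add: mult_ac)
  also have "\<dots> = fpow n Bf (Suc m) i j +
      c * (\<Sum>h<m. rs n ?A (m - Suc h) i * cs n Bf (Suc h) j)"
    by (simp add: csS)
  finally have *: "fpow n ?A (Suc m) i j = c * rs n ?A m i + (fpow n Bf (Suc m) i j +
      c * (\<Sum>h<m. rs n ?A (m - Suc h) i * cs n Bf (Suc h) j))" .
  have cs0: "cs n Bf 0 j = 1" using Suc.prems by (simp add: cs_def)
  have "(\<Sum>h<Suc m. rs n ?A (Suc m - Suc h) i * cs n Bf h j) =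
        rs n ?A m i + (\<Sum>h<m. rs n ?A (m - Suc h) i * cs n Bf (Suc h) j)"
    by (subst sum.lessThan_Suc_shift) (simp add: cs0)
  then show ?case using * by (simp add: algebra_simps)
qed

lemma tot_cs: "tot n M g = (\<Sum>j<n. cs n M g j)"
  unfolding tot_def cs_def by (rule sum.swap)

lemma rs_rec:
  "rs n (Af c) r i = rs n Bf r i + c * (\<Sum>g<r. rs n (Af c) (r - Suc g) i * tot n Bf g)"
proof -
  have "rs n (Af c) r i = (\<Sum>j<n. fpow n Bf r i j + c * (\<Sum>h<r. rs n (Af c) (r - Suc h) i * cs n Bf h j))"
    unfolding rs_def[of n "Af c" r i] by (rule sum.cong) (simp_all add: LEM)
  also have "\<dots> = (\<Sum>j<n. fpow n Bf r i j) + c * (\<Sum>h<r. rs n (Af c) (r - Suc h) i * (\<Sum>j<n. cs n Bf h j))"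
    by (simp add: sum.distrib sum_distrib_left sum_distrib_right) (subst sum.swap, simp add: mult_ac)
  finally show ?thesis by (simp add: tot_cs rs_def[of n Bf r i, symmetric])
qed

lemma gam_base: "(\<Sum>i<n. cs n Bf h i * rs n Bf r i) = tot n Bf (h + r)"
proof -
  have "(\<Sum>i<n. cs n Bf h i * rs n Bf r i) = (\<Sum>i<n. \<Sum>p<n. \<Sum>j<n. fpow n Bf h p i * fpow n Bf r i j)"
    unfolding cs_def rs_def by (simp add: sum_product)
  also have "\<dots> = (\<Sum>p<n. \<Sum>i<n. \<Sum>j<n. fpow n Bf h p i * fpow n Bf r i j)"
    by (rule sum.swap)
  also have "\<dots> = (\<Sum>p<n. \<Sum>j<n. \<Sum>i<n. fpow n Bf h p i * fpow n Bf r i j)"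
    by (rule sum.cong[OF refl], rule sum.swap)
  also have "\<dots> = (\<Sum>p<n. \<Sum>j<n. fpow n Bf (h + r) p j)"
    by (intro sum.cong refl) (simp add: fpow_add)
  finally show ?thesis by (simp add: tot_def)
qed

lemma gam_rec:
  "gam n c h r = tot n Bf (h + r) + c * (\<Sum>g<r. gam n c h (r - Suc g) * tot n Bf g)"
proof -
  have "gam n c h r = (\<Sum>i<n. cs n Bf h i * (rs n Bf r i + c * (\<Sum>g<r. rs n (Af c) (r - Suc g) i * tot n Bf g)))"
    unfolding gam_def by (subst rs_rec) simp
  also have "\<dots> = (\<Sum>i<n. cs n Bf h i * rs n Bf r i) +
      c * (\<Sum>g<r. (\<Sum>i<n. cs n Bf h i * rs n (Af c) (r - Suc g) i) * tot n Bf g)"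
    by (simp add: algebra_simps sum.distrib sum_distrib_left sum_distrib_right) (subst sum.swap, simp add: mult_ac)
  finally show ?thesis by (simp add: gam_base gam_def)
qed

lemma trace_dec:
  "(\<Sum>i<n. fpow n (Af c) m i i) = (\<Sum>i<n. fpow n Bf m i i) + c * (\<Sum>h<m. gam n c h (m - Suc h))"
proof -
  have "(\<Sum>i<n. fpow n (Af c) m i i) = (\<Sum>i<n. fpow n Bf m i i + c * (\<Sum>h<m. rs n (Af c) (m - Suc h) i * cs n Bf h i))"
    by (rule sum.cong) (simp_all add: LEM)
  also have "\<dots> = (\<Sum>i<n. fpow n Bf m i i) + c * (\<Sum>h<m. gam n c h (m - Suc h))"
    unfolding gam_def
    by (simp add: sum.distrib sum_distrib_left) (subst sum.swap, simp add: mult_ac)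
  finally show ?thesis .
qed

lemma pi_half_ok: "\<forall>j::int. pi / 2 \<noteq> of_int j * pi"
proof
  fix j :: int
  show "pi / 2 \<noteq> of_int j * pi"
  proof
    assume "pi / 2 = of_int j * pi"
    then have "of_int (2 * j) = (1::real)" by (simp add: field_simps)
    then have "2 * j = 1" by linarith
    then show False by presburger
  qed
qed

lemma Af0: "Af 0 = Bf" by (simp add: Af_def fun_eq_iff)

lemma cot_pi_half: "cot (pi / 2) = 0" by (simp add: cot_def)

lemma fpow_B_eig:
  assumes n: "n > 0" and ij: "i < n" "j < n"
  shows "fpow n Bf m i j = (\<Sum>k<n. Vm n (pi/2) i k * of_real (cot (th n (pi/2) k)) ^ m * Wm n (pi/2) k j)"
  using fpow_eig[OF n pi_half_ok ij, of m] by (simp add: Af0 cot_pi_half)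

lemma trace_B: "n > 0 \<Longrightarrow> (\<Sum>i<n. fpow n Bf m i i) = of_real (S m n (pi/2))"
  using part1[OF _ pi_half_ok, of n m] by (simp add: trace_AM Af0 cot_pi_half)

lemma cis_int_shift: "cis (x + 2 * pi * of_int j) = cis x"
  by (simp add: cis_mult[symmetric] cis_multiple_2pi)

lemma colsum_prod:
  assumes n: "n > 0" and k: "k < n"
  shows "(\<Sum>p<n. Vm n (pi/2) p k) * (\<Sum>j<n. Wm n (pi/2) k j) =
         of_real ((1 + cot (th n (pi/2) k) ^ 2) / real n)"
proof -
  define t where "t = th n (pi/2) k"
  define w where "w = cis (-2 * t)"
  define z where "z = cis (2 * t)"
  have st: "sin t \<noteq> 0" unfolding t_def by (rule sin_th_nz[OF n pi_half_ok])
  have nt: "real n * t = pi / 2 + real k * pi" using n by (simp add: t_def th_def)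
  have wn: "w ^ n = -1"
  proof -
    have "w ^ n = cis (real n * (-2 * t))" by (simp add: w_def DeMoivre)
    also have "real n * (-2 * t) = -pi + 2 * pi * of_int (- int k)" using nt by (simp add: algebra_simps)
    also have "cis \<dots> = cis (-pi)" by (rule cis_int_shift)
    finally show ?thesis by (simp add: complex_eq_iff)
  qed
  have zn: "z ^ n = -1"
  proof -
    have "z ^ n = cis (real n * (2 * t))" by (simp add: z_def DeMoivre)
    also have "real n * (2 * t) = pi + 2 * pi * of_int (int k)" using nt by (simp add: algebra_simps)
    also have "cis \<dots> = cis pi" by (rule cis_int_shift)
    finally show ?thesis by (simp add: complex_eq_iff)
  qed
  have wz: "w * z = 1" by (simp add: w_def z_def cis_mult)
  have wpz: "w + z = of_real (2 * cos (2 * t))" by (simp add: w_def z_def complex_eq_iff)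
  have prod: "(1 - w) * (1 - z) = of_real (4 * sin t ^ 2)"
  proof -
    have "(1 - w) * (1 - z) = 2 - (w + z)" using wz by (simp add: algebra_simps)
    also have "\<dots> = of_real (2 - 2 * cos (2 * t))" by (simp add: wpz)
    also have "2 - 2 * cos (2 * t) = 4 * sin t ^ 2" by (simp add: cos_double_sin)
    finally show ?thesis .
  qed
  have s2: "sin t ^ 2 \<noteq> 0" using st by simp
  have w1: "w \<noteq> 1" using prod s2 by auto
  have z1: "z \<noteq> 1" using prod s2 by auto
  have S1: "(\<Sum>p<n. Vm n (pi/2) p k) = 2 / (1 - w)"
  proof -
    have "(\<Sum>p<n. Vm n (pi/2) p k) = (\<Sum>p<n. w ^ p)" by (simp add: Vm_def w_def t_def)
    also have "\<dots> = 2 / (1 - w)" using w1 by (simp add: sum_gp_strict wn)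
    finally show ?thesis .
  qed
  have S2: "(\<Sum>j<n. Wm n (pi/2) k j) = 2 / (1 - z) / of_nat n"
  proof -
    have "(\<Sum>j<n. Wm n (pi/2) k j) = (\<Sum>j<n. z ^ j) / of_nat n"
      by (simp add: Wm_def z_def t_def DeMoivre sum_divide_distrib mult_ac)
    also have "\<dots> = 2 / (1 - z) / of_nat n" using z1 by (simp add: sum_gp_strict zn)
    finally show ?thesis .
  qed
  have "(\<Sum>p<n. Vm n (pi/2) p k) * (\<Sum>j<n. Wm n (pi/2) k j) = 4 / ((1 - w) * (1 - z)) / of_nat n"
    by (simp add: S1 S2)
  also have "\<dots> = of_real (1 / (sin t ^ 2 * real n))" by (simp add: prod)
  also have "1 / (sin t ^ 2 * real n) = (1 + cot t ^ 2) / real n"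
  proof -
    have "1 + cot t ^ 2 = 1 / sin t ^ 2"
      using s2 sin_cos_squared_add[of t] by (simp add: cot_def field_simps power_divide)
    then show ?thesis by simp
  qed
  finally show ?thesis by (simp add: t_def)
qed

lemma tot_B:
  assumes n: "n > 0"
  shows "tot n Bf g = of_real ((S g n (pi/2) + S (g+2) n (pi/2)) / real n)"
proof -
  let ?V = "Vm n (pi/2)" and ?W = "Wm n (pi/2)" and ?X = "\<lambda>k. cot (th n (pi/2) k)"
  have "tot n Bf g = (\<Sum>p<n. \<Sum>j<n. \<Sum>k<n. ?V p k * of_real (?X k) ^ g * ?W k j)"
    unfolding tot_def by (intro sum.cong refl) (simp add: fpow_B_eig[OF n])
  also have "\<dots> = (\<Sum>k<n. of_real (?X k) ^ g * ((\<Sum>p<n. ?V p k) * (\<Sum>j<n. ?W k j)))"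
  proof -
    have "(\<Sum>p<n. \<Sum>j<n. \<Sum>k<n. ?V p k * of_real (?X k) ^ g * ?W k j) =
          (\<Sum>p<n. \<Sum>k<n. \<Sum>j<n. ?V p k * of_real (?X k) ^ g * ?W k j)"
      by (rule sum.cong[OF refl], rule sum.swap)
    also have "\<dots> = (\<Sum>k<n. \<Sum>p<n. \<Sum>j<n. ?V p k * of_real (?X k) ^ g * ?W k j)"
      by (rule sum.swap)
    also have "\<dots> = (\<Sum>k<n. of_real (?X k) ^ g * ((\<Sum>p<n. ?V p k) * (\<Sum>j<n. ?W k j)))"
      by (simp add: sum_product sum_distrib_left mult_ac)
    finally show ?thesis .
  qed
  also have "\<dots> = (\<Sum>k<n. of_real (?X k ^ g * ((1 + ?X k ^ 2) / real n)))"
    by (intro sum.cong refl) (simp add: colsum_prod[OF n])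
  also have "\<dots> = of_real ((S g n (pi/2) + S (g+2) n (pi/2)) / real n)"
    by (simp add: S_def th_def sum_divide_distrib[symmetric] sum.distrib[symmetric] algebra_simps power_add power2_eq_square)
  finally show ?thesis .
qed

definition GI :: "complex \<Rightarrow> bool" where
  "GI z \<longleftrightarrow> Re z \<in> \<int> \<and> Im z \<in> \<int>"

lemma GI_add: "GI a \<Longrightarrow> GI b \<Longrightarrow> GI (a + b)" by (simp add: GI_def)
lemma GI_mult: "GI a \<Longrightarrow> GI b \<Longrightarrow> GI (a * b)" by (simp add: GI_def)
lemma GI_0: "GI 0" and GI_1: "GI 1" by (simp_all add: GI_def)
lemma GI_sum: "(\<And>x. x \<in> A \<Longrightarrow> GI (f x)) \<Longrightarrow> GI (sum f A)"
  by (induction A rule: infinite_finite_induct) (auto simp: GI_0 GI_add)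
lemma GI_Bf: "GI (Bf i j)" by (simp add: GI_def Bf_def)
lemma GI_fpow: "GI (fpow n Bf m i j)"
  by (induction m arbitrary: j) (auto simp: GI_0 GI_1 intro!: GI_sum GI_mult GI_Bf)

lemma GI_real: "GI (of_real r) \<Longrightarrow> r \<in> \<int>" by (simp add: GI_def)



fun P :: "nat \<Rightarrow> nat \<Rightarrow> rat poly" where
  "P 0 j = (if j = 0 then [:0,1:] else 0)"
| "P (Suc 0) j = (if j = 1 then [:0,1:] else 0)"
| "P (Suc (Suc m)) j = Polynomial.smult (1 / of_nat (Suc m)) ([:0,1:] *
      (Polynomial.smult (of_nat (Suc j)) (P (Suc m) (Suc j)) + Polynomial.smult (of_nat (j - 1)) (P (Suc m) (j - 1)))) - P m j"

lemma P_zero: "m < j \<or> odd (m + j) \<Longrightarrow> P m j = 0"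
proof (induction m j rule: P.induct)
  case (3 m j)
  have a: "P (Suc m) (Suc j) = 0" using 3 by (intro "3.IH"(1)) auto
  have b: "Polynomial.smult (of_nat (j - 1)) (P (Suc m) (j - 1)) = 0"
  proof (cases "j = 0")
    case False
    then have "P (Suc m) (j - 1) = 0" using 3 by (intro "3.IH"(2)) auto
    then show ?thesis by simp
  qed simp
  have c: "P m j = 0" using 3 by (intro "3.IH"(3)) auto
  show ?case by (simp only: P.simps a b c) simp
qed (auto dest: odd_pos)

definition ev :: "nat \<Rightarrow> rat poly \<Rightarrow> real" where
  "ev n q = of_rat (poly q (of_nat n))"

definition Qn :: "nat \<Rightarrow> nat \<Rightarrow> real poly" where
  "Qn n m = (\<Sum>j\<le>m. monom (ev n (P m j)) j)"

lemma coeff_Qn: "coeff (Qn n m) j = ev n (P m j)"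
  by (auto simp: Qn_def coeff_sum P_zero ev_def)

lemma ev_simps: "ev n (p + q) = ev n p + ev n q" "ev n (p - q) = ev n p - ev n q"
  "ev n (Polynomial.smult a p) = of_rat a * ev n p" "ev n ([:0,1:] * p) = real n * ev n p" "ev n 0 = 0" "ev n (pCons 0 p) = real n * ev n p"
  by (simp_all add: ev_def of_rat_add of_rat_diff of_rat_mult)

lemma Qn_rec: "Qn n (Suc (Suc m)) = Polynomial.smult (real n / real (Suc m))
    (pderiv (Qn n (Suc m)) + pCons 0 (pCons 0 (pderiv (Qn n (Suc m))))) - Qn n m"
proof (rule poly_eqI)
  fix j
  show "coeff (Qn n (Suc (Suc m))) j = coeff (Polynomial.smult (real n / real (Suc m))
    (pderiv (Qn n (Suc m)) + pCons 0 (pCons 0 (pderiv (Qn n (Suc m))))) - Qn n m) j"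
  proof (cases j)
    case 0
    then show ?thesis by (simp add: coeff_Qn coeff_pderiv ev_simps of_rat_divide of_rat_add field_simps)
  next
    case (Suc j')
    show ?thesis
    proof (cases j')
      case 0
      then show ?thesis using Suc by (simp add: coeff_Qn coeff_pderiv ev_simps of_rat_divide of_rat_add field_simps)
    next
      case (Suc j'')
      then show ?thesis using \<open>j = Suc j'\<close>
        by (simp add: coeff_Qn coeff_pderiv ev_simps of_rat_divide of_rat_add field_simps)
    qed
  qed
qed

lemma ok_iff_sin: "(\<forall>j::int. a \<noteq> of_int j * pi) \<longleftrightarrow> sin a \<noteq> 0"
  by (auto simp: sin_zero_iff_int2)

lemma inv_sin2: "sin t \<noteq> 0 \<Longrightarrow> inverse (sin t ^ 2) = 1 + cot t ^ 2"
  using sin_cos_squared_add[of t] by (simp add: cot_def field_simps power_divide)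

lemma fpow1: "i < n \<Longrightarrow> fpow n M (Suc 0) i j = M i j"
proof -
  assume i: "i < n"
  have "fpow n M (Suc 0) i j = (\<Sum>l<n. if i = l then M l j else 0)"
    by (simp only: fpow.simps) (rule sum.cong, auto)
  also have "\<dots> = M i j" using i by simp
  finally show ?thesis .
qed

lemma S1:
  assumes n: "n > 0" and a: "\<forall>j::int. a \<noteq> of_int j * pi"
  shows "S 1 n a = real n * cot a"
proof -
  have "complex_of_real (S 1 n a) = (\<Sum>i<n. fpow n (Af (of_real (cot a))) 1 i i)"
    using part1[OF n a, of 1] by (simp only: trace_AM)
  also have "\<dots> = (\<Sum>i<n. of_real (cot a))"
  proof (rule sum.cong)
    fix i assume "i \<in> {..<n}"
    then show "fpow n (Af (of_real (cot a))) 1 i i = of_real (cot a)"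
      by (simp only: One_nat_def fpow1[OF \<open>i \<in> {..<n}\<close>[simplified]]) (simp add: Af_def Bf_def)
  qed simp
  finally have "complex_of_real (S 1 n a) = complex_of_real (real n * cot a)" by simp
  then show ?thesis using of_real_eq_iff by blast
qed

lemma DERIV_cot_lin:
  assumes "sin (th n a k) \<noteq> 0" "n > 0"
  shows "DERIV (\<lambda>x. cot ((x + real k * pi) / real n)) a :> - inverse (sin (th n a k) ^ 2) * (1 / real n)"
proof -
  have d: "DERIV (\<lambda>x. (x + real k * pi) / real n) a :> 1 / real n"
    using assms(2) by (auto intro!: derivative_eq_intros)
  show ?thesis
    using DERIV_chain2[OF DERIV_cot[OF assms(1)[unfolded th_def]] d] assms(2) by (simp add: th_def)
qed

lemma DERIV_S:
  assumes n: "n > 0" and a: "\<forall>j::int. a \<noteq> of_int j * pi"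
  shows "DERIV (\<lambda>x. S m n x) a :>
     (\<Sum>k<n. of_nat m * ((- inverse (sin (th n a k) ^ 2) * (1 / real n)) * cot (th n a k) ^ (m - Suc 0)))"
proof -
  have "DERIV (\<lambda>x. \<Sum>k<n. cot ((x + real k * pi) / real n) ^ m) a :>
     (\<Sum>k<n. of_nat m * ((- inverse (sin (th n a k) ^ 2) * (1 / real n)) * cot (th n a k) ^ (m - Suc 0)))"
  proof (rule DERIV_sum)
    fix k assume "k \<in> {..<n}"
    have "cot ((a + real k * pi) / real n) = cot (th n a k)" by (simp add: th_def)
    then show "DERIV (\<lambda>x. cot ((x + real k * pi) / real n) ^ m) a :>
       of_nat m * ((- inverse (sin (th n a k) ^ 2) * (1 / real n)) * cot (th n a k) ^ (m - Suc 0))"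
      using DERIV_power[OF DERIV_cot_lin[OF sin_th_nz[OF n a, of k] n], of m] by simp
  qed
  then show ?thesis by (simp add: S_def[abs_def])
qed

lemma S_rep:
  assumes n: "n > 0"
  shows "\<forall>j::int. a \<noteq> of_int j * pi \<Longrightarrow> S m n a = poly (Qn n m) (cot a)"
proof (induction m arbitrary: a rule: less_induct)
  case (less m)
  show ?case
  proof (cases m)
    case 0
    then show ?thesis by (simp add: S_def Qn_def ev_def poly_monom)
  next
    case (Suc m1)
    show ?thesis
    proof (cases m1)
      case 0
      then show ?thesis using Suc S1[OF n less.prems] by (simp add: Qn_def ev_def poly_monom)
    next
      case (Suc m')
      have m: "m = Suc (Suc m')" using \<open>m = Suc m1\<close> Suc by simp
      have IH0: "S m' n x = poly (Qn n m') (cot x)" if "sin x \<noteq> 0" for x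
        using less.IH[of m' x] that m by (simp add: ok_iff_sin)
      have IH1: "S (Suc m') n x = poly (Qn n (Suc m')) (cot x)" if "sin x \<noteq> 0" for x
        using less.IH[of "Suc m'" x] that m by (simp add: ok_iff_sin)
      have sa: "sin a \<noteq> 0" using less.prems by (simp add: ok_iff_sin)
      have U: "open {x::real. sin x \<noteq> 0}"
        by (rule open_Collect_neq) (auto intro!: continuous_intros)
      have ev1: "eventually (\<lambda>x. S (Suc m') n x = poly (Qn n (Suc m')) (cot x)) (nhds a)"
        using eventually_nhds_in_open[OF U, of a] sa by (auto elim!: eventually_mono intro: IH1)
      define Q where "Q = Qn n (Suc m')"
      have D2: "DERIV (\<lambda>x. poly Q (cot x)) a :> poly (pderiv Q) (cot a) * (- inverse (sin a ^ 2))"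
        using DERIV_chain2[OF poly_DERIV[of Q "cot a"] DERIV_cot[OF sa]] by simp
      have D2': "DERIV (\<lambda>x. S (Suc m') n x) a :> poly (pderiv Q) (cot a) * (- inverse (sin a ^ 2))"
        using D2 DERIV_cong_ev[OF refl ev1 refl] unfolding Q_def by simp
      have eq: "(\<Sum>k<n. of_nat (Suc m') * ((- inverse (sin (th n a k) ^ 2) * (1 / real n)) * cot (th n a k) ^ (Suc m' - Suc 0)))
           = poly (pderiv Q) (cot a) * (- inverse (sin a ^ 2))"
        using DERIV_unique[OF DERIV_S[OF n less.prems] D2'] .
      have "(\<Sum>k<n. of_nat (Suc m') * ((- inverse (sin (th n a k) ^ 2) * (1 / real n)) * cot (th n a k) ^ (Suc m' - Suc 0)))
          = - (real (Suc m') / real n) * (S m' n a + S (Suc (Suc m')) n a)"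
      proof -
        have "(\<Sum>k<n. of_nat (Suc m') * ((- inverse (sin (th n a k) ^ 2) * (1 / real n)) * cot (th n a k) ^ (Suc m' - Suc 0)))
            = (\<Sum>k<n. - (real (Suc m') / real n) * (cot (th n a k) ^ m' + cot (th n a k) ^ Suc (Suc m')))"
          by (intro sum.cong refl, subst inv_sin2[OF sin_th_nz[OF n less.prems]], simp add: field_simps power2_eq_square)
        also have "\<dots> = - (real (Suc m') / real n) * (S m' n a + S (Suc (Suc m')) n a)"
          by (simp only: sum_distrib_left[symmetric] sum.distrib S_def th_def)
        finally show ?thesis .
      qed
      with eq have eq2: "- (real (Suc m') / real n) * (S m' n a + S (Suc (Suc m')) n a) =
          poly (pderiv Q) (cot a) * (- (1 + cot a ^ 2))"
        unfolding inv_sin2[OF sa] by simp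
      have key: "S (Suc (Suc m')) n a = (real n / real (Suc m')) * (1 + cot a ^ 2) * poly (pderiv Q) (cot a) - S m' n a"
      proof -
        have "S m' n a + S (Suc (Suc m')) n a = (real n / real (Suc m')) * ((1 + cot a ^ 2) * poly (pderiv Q) (cot a))"
          using eq2 n by (simp add: field_simps)
        then show ?thesis by (simp add: algebra_simps)
      qed
      show ?thesis
        unfolding m key IH0[OF sa] Qn_rec Q_def
        by (simp add: field_simps power2_eq_square)
    qed
  qed
qed



function gp :: "(nat \<Rightarrow> real) \<Rightarrow> nat \<Rightarrow> nat \<Rightarrow> real poly" where
  "gp b h r = [:b (h + r):] + pCons 0 (\<Sum>g<r. Polynomial.smult (b g) (gp b h (r - Suc g)))"
  by auto
termination by (relation "measure (\<lambda>(b,h,r). r)") auto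

declare gp.simps[simp del]

definition Tp :: "(nat \<Rightarrow> real) \<Rightarrow> (nat \<Rightarrow> real) \<Rightarrow> nat \<Rightarrow> real poly" where
  "Tp b t m = [:t m:] + pCons 0 (\<Sum>h<m. gp b h (m - Suc h))"

lemma gam_poly:
  assumes hb: "\<And>g. tot n Bf g = of_real (b g)"
  shows "gam n (of_real c) h r = of_real (poly (gp b h r) c)"
proof (induction r rule: less_induct)
  case (less r)
  have "gam n (of_real c) h r = tot n Bf (h + r) + of_real c * (\<Sum>g<r. gam n (of_real c) h (r - Suc g) * tot n Bf g)"
    by (rule gam_rec)
  also have "\<dots> = of_real (b (h + r)) + of_real c * (\<Sum>g<r. of_real (poly (gp b h (r - Suc g)) c) * of_real (b g))"
    by (simp add: hb less.IH)
  also have "\<dots> = of_real (poly (gp b h r) c)"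
    by (subst (2) gp.simps) (simp add: poly_sum mult_ac)
  finally show ?case .
qed

lemma trace_poly:
  assumes hb: "\<And>g. tot n Bf g = of_real (b g)" and ht: "(\<Sum>i<n. fpow n Bf m i i) = of_real (t m)"
  shows "(\<Sum>i<n. fpow n (Af (of_real c)) m i i) = of_real (poly (Tp b t m) c)"
  by (simp add: trace_dec ht gam_poly[OF hb] Tp_def poly_sum)

lemma coeff_gp0: "coeff (gp b h r) 0 = b (h + r)"
  by (subst gp.simps) simp

lemma coeff_gpS: "coeff (gp b h r) (Suc j) = (\<Sum>g<r. b g * coeff (gp b h (r - Suc g)) j)"
  by (subst gp.simps) (simp add: coeff_sum)

lemma coeff_Tp0: "coeff (Tp b t m) 0 = t m"
  by (simp add: Tp_def)

lemma coeff_TpS: "coeff (Tp b t m) (Suc j) = (\<Sum>h<m. coeff (gp b h (m - Suc h)) j)"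
  by (simp add: Tp_def coeff_sum)

lemma gp_pos:
  fixes b :: "nat \<Rightarrow> real"
  assumes b0: "\<And>g. 0 \<le> b g" and b1: "\<And>g. even g \<Longrightarrow> 0 < b g"
  shows "0 \<le> coeff (gp b h r) j \<and> (j \<le> r \<and> even (h + r + j) \<longrightarrow> 0 < coeff (gp b h r) j)"
proof (induction j arbitrary: r)
  case 0
  then show ?case using b0 b1 by (simp add: coeff_gp0)
next
  case (Suc j)
  have nn: "0 \<le> coeff (gp b h r) (Suc j)"
    unfolding coeff_gpS using Suc.IH b0 by (auto intro!: sum_nonneg)
  moreover have "0 < coeff (gp b h r) (Suc j)" if h: "Suc j \<le> r" "even (h + r + Suc j)"
  proof -
    have pos: "0 < b 0 * coeff (gp b h (r - Suc 0)) j"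
      using Suc.IH[of "r - Suc 0"] b1[of 0] h by (auto intro!: mult_pos_pos)
    have "b 0 * coeff (gp b h (r - Suc 0)) j \<le> (\<Sum>g<r. b g * coeff (gp b h (r - Suc g)) j)"
      by (rule member_le_sum) (use h Suc.IH b0 in auto)
    with pos show ?thesis unfolding coeff_gpS by linarith
  qed
  ultimately show ?case by blast
qed

lemma gp_int:
  assumes "\<And>g. b g \<in> \<int>"
  shows "coeff (gp b h r) j \<in> \<int>"
proof (induction j arbitrary: r)
  case 0
  then show ?case using assms by (simp add: coeff_gp0)
next
  case (Suc j)
  then show ?case using assms unfolding coeff_gpS by (auto intro!: Ints_sum Ints_mult)
qed

lemma Tp_pos:
  fixes b t :: "nat \<Rightarrow> real" and m j :: nat
  assumes b0: "\<And>g. 0 \<le> b g" and b1: "\<And>g. even g \<Longrightarrow> 0 < b g"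
    and t1: "even m \<Longrightarrow> 0 < t m" and j: "j \<le> m" "even (m + j)"
  shows "0 < coeff (Tp b t m) j"
proof (cases j)
  case 0
  then show ?thesis using t1 j by (simp add: coeff_Tp0)
next
  case (Suc j')
  have pos: "0 < coeff (gp b 0 (m - Suc 0)) j'"
    using gp_pos[OF b0 b1, where h=0 and r="m - Suc 0" and j=j'] j Suc by auto
  have "coeff (gp b 0 (m - Suc 0)) j' \<le> (\<Sum>h<m. coeff (gp b h (m - Suc h)) j')"
    by (rule member_le_sum) (use j Suc gp_pos[OF b0 b1] in auto)
  with pos show ?thesis unfolding Suc coeff_TpS by linarith
qed

lemma Tp_int:
  fixes b t :: "nat \<Rightarrow> real"
  assumes "\<And>g. b g \<in> \<int>" "t m \<in> \<int>"
  shows "coeff (Tp b t m) j \<in> \<int>"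
  using assms gp_int[OF assms(1)] by (cases j) (auto simp: coeff_Tp0 coeff_TpS intro!: Ints_sum)



lemma intval_ext:
  fixes p :: "rat poly"
  assumes "\<And>n::nat. n \<ge> 2 \<Longrightarrow> poly p (of_nat n) \<in> \<int>"
  shows "poly p (of_int x) \<in> \<int>"
  using assms
proof (induction "degree p" arbitrary: p x rule: less_induct)
  case less
  show ?case
  proof (cases "degree p = 0")
    case True
    then obtain a where "p = [:a:]" by (metis degree_eq_zeroE)
    then show ?thesis using less.prems[of 2] by simp
  next
    case False
    define q where "q = p \<circ>\<^sub>p [:1,1:] - p"
    have qv: "poly q y = poly p (y + 1) - poly p y" for y
      by (simp add: q_def poly_pcompose algebra_simps)
    have dq: "degree q < degree p"
    proof -
      have d1: "degree (p \<circ>\<^sub>p [:1,1:]) = degree p" by (simp add: degree_pcompose)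
      have lc: "coeff (p \<circ>\<^sub>p [:1,1:]) (degree p) = lead_coeff p"
        using lead_coeff_comp[of "[:1,1:]" p] d1 by simp
      have le: "degree q \<le> degree p"
        unfolding q_def using degree_diff_le[of "p \<circ>\<^sub>p [:1,1:]" "degree p" p] d1 by simp
      have c0: "coeff q (degree p) = 0" by (simp add: q_def lc)
      show ?thesis
      proof (cases "q = 0")
        case True then show ?thesis using False by simp
      next
        case qn: False
        then have "coeff q (degree q) \<noteq> 0" by simp
        then have "degree q \<noteq> degree p" using c0 by metis
        then show ?thesis using le by simp
      qed
    qed
    have qint: "poly q (of_int y) \<in> \<int>" for y
    proof (rule less.hyps[OF dq])
      fix n :: nat assume "2 \<le> n"
      have "poly p (of_nat (Suc n)) \<in> \<int>" by (rule less.prems) (use \<open>2 \<le> n\<close> in simp)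
      moreover have "poly p (of_nat n) \<in> \<int>" by (rule less.prems) (use \<open>2 \<le> n\<close> in simp)
      ultimately show "poly q (of_nat n) \<in> \<int>" by (simp add: qv Ints_diff add.commute)
    qed
    have down: "poly p (of_int (2 - int N)) \<in> \<int>" for N
    proof (induction N)
      case 0
      then show ?case using less.prems[of 2] by simp
    next
      case (Suc N)
      have "poly p (of_int (2 - int (Suc N))) = poly p (of_int (2 - int N)) - poly q (of_int (2 - int (Suc N)))"
        by (simp add: qv algebra_simps)
      moreover have "poly q (of_int (2 - int (Suc N))) \<in> \<int>" by (rule qint)
      ultimately show ?case using Suc.IH by (simp only:) (rule Ints_diff)
    qed
    show ?thesis
    proof (cases "x \<ge> 2")
      case True
      then have "x = int (nat x)" by simp
      then have "poly p (of_int x) = poly p (of_nat (nat x))" by (metis of_int_of_nat_eq)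
      then show ?thesis using less.prems[of "nat x"] True by simp
    next
      case False
      then have "x = 2 - int (nat (2 - x))" by simp
      then show ?thesis using down[of "nat (2 - x)"] by metis
    qed
  qed
qed

lemma cot_surj: "\<exists>a. (\<forall>j::int. a \<noteq> of_int j * pi) \<and> cot a = c"
proof -
  define a where "a = pi / 2 - arctan c"
  have s: "sin a = cos (arctan c)" by (simp add: a_def cos_sin_eq)
  have co: "cos a = sin (arctan c)" by (simp add: a_def sin_cos_eq)
  have "sin a \<noteq> 0" using s by simp
  moreover have "cot a = c" using s co tan_arctan[of c] by (simp add: cot_def tan_def)
  ultimately show ?thesis using ok_iff_sin by blast
qed

lemma of_rat_Ints: "of_rat r \<in> (\<int> :: real set) \<Longrightarrow> r \<in> \<int>"
proof -
  assume "of_rat r \<in> (\<int> :: real set)"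
  then obtain z where "(of_rat r :: real) = of_int z" by (auto elim: Ints_cases)
  then have "(of_rat r :: real) = of_rat (of_int z)" by simp
  then have "r = of_int z" by (simp only: of_rat_eq_iff)
  then show ?thesis by simp
qed

lemma reindex_par:
  fixes f :: "nat \<Rightarrow> real"
  assumes "\<And>j. odd (m + j) \<Longrightarrow> f j = 0"
  shows "(\<Sum>j\<le>m. f j) = (\<Sum>k\<le>m div 2. f (m - 2 * k))"
proof -
  have inj: "inj_on (\<lambda>k. m - 2 * k) {..m div 2}"
    by (rule inj_onI) auto
  have "(\<Sum>k\<le>m div 2. f (m - 2 * k)) = (\<Sum>j\<in>(\<lambda>k. m - 2 * k) ` {..m div 2}. f j)"
    by (simp add: sum.reindex[OF inj])
  also have "\<dots> = (\<Sum>j\<le>m. f j)"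
  proof (rule sum.mono_neutral_left)
    show "(\<lambda>k. m - 2 * k) ` {..m div 2} \<subseteq> {..m}" by auto
    show "\<forall>j\<in>{..m} - (\<lambda>k. m - 2 * k) ` {..m div 2}. f j = 0"
    proof
      fix j assume j: "j \<in> {..m} - (\<lambda>k. m - 2 * k) ` {..m div 2}"
      show "f j = 0"
      proof (rule assms, rule ccontr)
        assume "\<not> odd (m + j)"
        then have ev: "even (m - j)" using j by auto
        have "j = m - 2 * ((m - j) div 2)" using ev j by auto
        moreover have "(m - j) div 2 \<le> m div 2" by (simp add: div_le_mono)
        ultimately show False using j by auto
      qed
    qed
  qed simp
  finally show ?thesis by simp
qed



lemma coeffs_good:
  assumes n2: "n \<ge> 2"
  shows "ev n (P m j) \<in> \<int> \<and> (j \<le> m \<and> even (m + j) \<longrightarrow> 0 < ev n (P m j))"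
proof -
  have n: "n > 0" using n2 by simp
  define \<tau> where "\<tau> g = S g n (pi/2)" for g
  define b where "b g = (\<tau> g + \<tau> (g+2)) / real n" for g
  have hb: "tot n Bf g = of_real (b g)" for g
    using tot_B[OF n] by (simp add: b_def \<tau>_def)
  have ht: "(\<Sum>i<n. fpow n Bf g i i) = of_real (\<tau> g)" for g
    using trace_B[OF n] by (simp add: \<tau>_def)
  have \<tau>P: "\<tau> g = ev n (P g 0)" for g
    using S_rep[OF n pi_half_ok, of g] by (simp add: \<tau>_def cot_pi_half poly_0_coeff_0 coeff_Qn)
  have \<tau>odd: "\<tau> g = 0" if "odd g" for g
    using that by (simp add: \<tau>P P_zero ev_def)
  have \<tau>even: "0 < \<tau> g" if "even g" for g
  proof -
    have t0: "0 < cot ((pi / 2 + real 0 * pi) / real n)"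
    proof (rule cot_gt_zero)
      show "0 < (pi / 2 + real 0 * pi) / real n" using n by simp
      have "pi / 2 / real n \<le> pi / 2 / 2" using n2 by (intro divide_left_mono) auto
      also have "\<dots> < pi / 2" by simp
      finally show "(pi / 2 + real 0 * pi) / real n < pi / 2" by simp
    qed
    have "0 < cot ((pi / 2 + real 0 * pi) / real n) ^ g" using t0 by simp
    also have "\<dots> \<le> (\<Sum>k<n. cot ((pi / 2 + real k * pi) / real n) ^ g)"
      by (rule member_le_sum) (use n that in \<open>auto simp: zero_le_even_power\<close>)
    finally show ?thesis by (simp add: \<tau>_def S_def)
  qed
  have b1: "0 < b g" if "even g" for g
    using \<tau>even[OF that] \<tau>even[of "g+2"] that n by (simp add: b_def)
  have b0: "0 \<le> b g" for g
  proof (cases "even g")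
    case True then show ?thesis using b1 less_imp_le by blast
  next
    case False then show ?thesis using \<tau>odd[of g] \<tau>odd[of "g+2"] by (simp add: b_def)
  qed
  have bint: "b g \<in> \<int>" for g
  proof -
    have "GI (tot n Bf g)" unfolding tot_def by (intro GI_sum GI_fpow)
    then show ?thesis using hb GI_real by metis
  qed
  have tint: "\<tau> g \<in> \<int>" for g
  proof -
    have "GI (\<Sum>i<n. fpow n Bf g i i)" by (intro GI_sum GI_fpow)
    then show ?thesis using ht GI_real by metis
  qed
  have TQ: "Tp b \<tau> m = Qn n m"
  proof -
    have "poly (Tp b \<tau> m) c = poly (Qn n m) c" for c
    proof -
      obtain a where a: "\<forall>j::int. a \<noteq> of_int j * pi" and ca: "cot a = c" using cot_surj by blast
      have "complex_of_real (poly (Tp b \<tau> m) c) = (\<Sum>i<n. fpow n (Af (of_real c)) m i i)"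
        by (rule trace_poly[OF hb ht, symmetric])
      also have "\<dots> = mat_trace (AM n c ^\<^sub>m m)" by (rule trace_AM[symmetric])
      also have "\<dots> = complex_of_real (S m n a)" using part1[OF n a, of m] ca by simp
      also have "S m n a = poly (Qn n m) c" using S_rep[OF n a, of m] ca by simp
      finally show ?thesis by simp
    qed
    then have "poly (Tp b \<tau> m) = poly (Qn n m)" by (rule ext)
    then show ?thesis by (simp only: poly_eq_poly_eq_iff)
  qed
  have ce: "ev n (P m j) = coeff (Tp b \<tau> m) j" by (simp add: TQ coeff_Qn)
  show ?thesis
    unfolding ce
  proof (intro conjI impI)
    show "coeff (Tp b \<tau> m) j \<in> \<int>" by (rule Tp_int[OF bint tint])
  next
    assume "j \<le> m \<and> even (m + j)"
    then show "0 < coeff (Tp b \<tau> m) j" by (intro Tp_pos[OF b0 b1 \<tau>even]) auto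
  qed
qed

theorem theorem3p1:
  shows "(\<forall>m n (\<alpha>::real). m \<ge> 1 \<longrightarrow> n \<ge> 2 \<longrightarrow> (\<forall>j::int. \<alpha> \<noteq> of_int j * pi) \<longrightarrow>
           complex_of_real (S m n \<alpha>) =
           mat_trace ((complex_of_real (cot \<alpha>) \<cdot>\<^sub>m J_mat n + B_mat n) ^\<^sub>m m))
       \<and> (\<forall>m::nat. m \<ge> 1 \<longrightarrow>
           (\<exists>p :: nat \<Rightarrow> rat poly.
              (\<forall>k \<le> m div 2. \<forall>x::int. poly (p k) (of_int x) \<in> \<int>)
            \<and> (\<forall>n::nat. \<forall>\<alpha>::real. n \<ge> 2 \<longrightarrow> (\<forall>j::int. \<alpha> \<noteq> of_int j * pi) \<longrightarrow>
                 S m n \<alpha> = (\<Sum>k \<le> m div 2. of_rat (poly (p k) (of_nat n)) * cot \<alpha> ^ (m - 2 * k)))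
            \<and> (\<forall>n::nat. n \<ge> 2 \<longrightarrow> (\<forall>k \<le> m div 2.
                 poly (p k) (of_nat n) \<in> \<int> \<and> poly (p k) (of_nat n) > 0))))"
proof (intro conjI allI impI)
  fix m n :: nat and \<alpha> :: real
  assume "1 \<le> m" "2 \<le> n" "\<forall>j::int. \<alpha> \<noteq> of_int j * pi"
  then show "complex_of_real (S m n \<alpha>) =
           mat_trace ((complex_of_real (cot \<alpha>) \<cdot>\<^sub>m J_mat n + B_mat n) ^\<^sub>m m)"
    using part1[of n \<alpha> m] by (simp add: AM_def)
next
  fix m :: nat
  assume "1 \<le> m"
  have intn: "poly (P m j) (of_nat n) \<in> \<int>" if "n \<ge> 2" for n j
    using coeffs_good[OF that, of m j] of_rat_Ints by (simp add: ev_def)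
  have posn: "poly (P m (m - 2 * k)) (of_nat n) > 0" if "n \<ge> 2" "k \<le> m div 2" for n k
  proof -
    have "m - 2 * k \<le> m" "even (m + (m - 2 * k))" using that(2) by auto
    then have "0 < ev n (P m (m - 2 * k))" using coeffs_good[OF that(1), of m "m - 2 * k"] by (elim conjE) (erule mp, rule conjI)
    then show ?thesis by (simp add: ev_def)
  qed
  show "\<exists>p :: nat \<Rightarrow> rat poly.
              (\<forall>k \<le> m div 2. \<forall>x::int. poly (p k) (of_int x) \<in> \<int>)
            \<and> (\<forall>n::nat. \<forall>\<alpha>::real. n \<ge> 2 \<longrightarrow> (\<forall>j::int. \<alpha> \<noteq> of_int j * pi) \<longrightarrow>
                 S m n \<alpha> = (\<Sum>k \<le> m div 2. of_rat (poly (p k) (of_nat n)) * cot \<alpha> ^ (m - 2 * k)))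
            \<and> (\<forall>n::nat. n \<ge> 2 \<longrightarrow> (\<forall>k \<le> m div 2.
                 poly (p k) (of_nat n) \<in> \<int> \<and> poly (p k) (of_nat n) > 0))"
  proof (intro exI[of _ "\<lambda>k. P m (m - 2 * k)"] conjI allI impI)
    fix k :: nat and x :: int
    show "poly (P m (m - 2 * k)) (of_int x) \<in> \<int>"
      by (rule intval_ext) (rule intn)
  next
    fix n :: nat and \<alpha> :: real
    assume n2: "2 \<le> n" and a: "\<forall>j::int. \<alpha> \<noteq> of_int j * pi"
    have "S m n \<alpha> = poly (Qn n m) (cot \<alpha>)" using S_rep[of n \<alpha> m] n2 a by simp
    also have "\<dots> = (\<Sum>j\<le>m. ev n (P m j) * cot \<alpha> ^ j)"
      by (simp add: Qn_def poly_sum poly_monom)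
    also have "\<dots> = (\<Sum>k\<le>m div 2. ev n (P m (m - 2 * k)) * cot \<alpha> ^ (m - 2 * k))"
      by (rule reindex_par) (simp add: P_zero ev_def)
    finally show "S m n \<alpha> = (\<Sum>k \<le> m div 2. of_rat (poly (P m (m - 2 * k)) (of_nat n)) * cot \<alpha> ^ (m - 2 * k))"
      by (simp add: ev_def)
  next
    fix n k :: nat
    assume "2 \<le> n" "k \<le> m div 2"
    then show "poly (P m (m - 2 * k)) (of_nat n) \<in> \<int>" using intn by simp
  next
    fix n k :: nat
    assume "2 \<le> n" "k \<le> m div 2"
    then show "poly (P m (m - 2 * k)) (of_nat n) > 0" by (rule posn)
  qed
qed

end
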